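(* Let $\alpha_1,\dots,\alpha_4$ be constants, $H=H(t,t^-,q,q^-,p,p^-)$ smooth, and $X=\xi(t)\partial_t+\eta(t,q,p)\partial_q+\nu(t,q,p)\partial_p$ with $\xi(t)=\alpha t+f(t)$, $\alpha$ constant and $f$ $\tau$-periodic. Then, with $\dot\xi=D(\xi)$, $$\Big(\xi\frac{\delta}{\delta t}+\eta\frac{\delta}{\delta q}+\nu\frac{\delta}{\delta p}\Big)\Omega\equiv X\Big(\xi\frac{\delta\tilde H}{\delta t}+\eta\frac{\delta\tilde H}{\delta q}+\nu\frac{\delta\tilde H}{\delta p}\Big)+\dot\xi\Big(\xi\frac{\delta\tilde H}{\delta t}+\eta\frac{\delta\tilde H}{\delta q}+\nu\frac{\delta\tilde H}{\delta p}\Big).$$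
   Context: Constant delay $\tau>0$; $t^\pm=t\pm\tau$, $f^\pm=f(t\pm\tau)$; scalar $q,p$. $S_\pm$: forward/backward shift operators on expressions; $\xi^\pm=S_\pm(\xi)$ etc.; $H^+=S_+(H)$. $D$: total derivative acting on variables at $t^-,t,t^+$. $\tilde H=p^{-}(\alpha_{1}\dot{q}+\alpha_{2}\dot{q}^{-})+p(\alpha_{3}\dot{q}+\alpha_{4}\dot{q}^{-})-H$. For $F$ a function of $(t,t^-,q,q^-,p,p^-,\dot q,\dot q^-,\dot p,\dot p^-)$: $\frac{\delta F}{\delta p}=\frac{\partial F}{\partial p}-D\frac{\partial F}{\partial\dot p}+S_+\Big(\frac{\partial F}{\partial p^-}-D\frac{\partial F}{\partial\dot p^-}\Big)$, $\frac{\delta F}{\delta q}=\frac{\partial F}{\partial q}-D\frac{\partial F}{\partial\dot q}+S_+\Big(\frac{\partial F}{\partial q^-}-D\frac{\partial F}{\partial\dot q^-}\Big)$, $\frac{\delta F}{\delta t}=\frac{\partial F}{\partial t}+D\Big(\dot q\frac{\partial F}{\partial\dot q}+\dot p\frac{\partial F}{\partial\dot p}\Big)+S_+\Big(\frac{\partial F}{\partial t^-}+D\Big(\dot q^-\frac{\partial F}{\partial\dot q^-}+\dot p^-\frac{\partial F}{\partial\dot p^-}\Big)\Big)-D(F)$; in the left-hand side, the coefficients $\xi,\eta,\nu$ multiply the results of the operators applied to $\Omega$. $\Omega=X(\tilde H)+\tilde HD(\xi)=\nu^{-}(\alpha_{1}\dot{q}+\alpha_{2}\dot{q}^{-})+p^{-}(\alpha_{1}D(\eta)+\alpha_{2}D(\eta^{-}))+\nu(\alpha_{3}\dot{q}+\alpha_{4}\dot{q}^{-})+p(\alpha_{3}D(\eta)+\alpha_{4}D(\eta^{-}))+(\alpha_{2}p^{-}+\alpha_{4}p)\dot{q}^{-}D(\xi-\xi^{-})-\xi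 H_t-\eta H_q-\nu H_p-\xi^{-}H_{t^-}-\eta^{-}H_{q^-}-\nu^{-}H_{p^-}-HD(\xi)$. $X$ is prolonged to all variables at $t^-,t,t^+$ and their derivatives by the standard prolongation formulas ($\partial_{\dot q}$-coefficient $D(\eta)-\dot qD(\xi)$, $\partial_{\dot p}$-coefficient $D(\nu)-\dot pD(\xi)$, higher ones analogously), shifted variables carrying shifted coefficients. Variables are considered with $t^+-t=t-t^-=\tau$. *)

theory Defs
  imports "HOL-Analysis.Analysis"
begin

fun Ck :: "nat \<Rightarrow> ('a::real_normed_vector \<Rightarrow> real) \<Rightarrow> bool" where
  "Ck 0 g = continuous_on UNIV g"
| "Ck (Suc k) g = (\<exists>g'. (\<forall>x. (g has_derivative g' x) (at x)) \<and> (\<forall>v. Ck k (\<lambda>x. g' x v)))"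

definition smooth_fn :: "('a::real_normed_vector \<Rightarrow> real) \<Rightarrow> bool" where
  "smooth_fn g = (\<forall>k. Ck k g)"

text \<open>A jet point: for every shift index k (i.e. the lattice point t + k tau) the time
  coordinate t_k, and all derivatives q_k^(j), p_k^(j) of q and p at that point.
  Thus tj z 0 = t, tj z (-1) = t^-, qj z 0 0 = q, qj z (-1) 1 = derivative of q at t^-, etc.\<close>

record jet =
  tj :: "int \<Rightarrow> real"
  qj :: "int \<Rightarrow> nat \<Rightarrow> real"
  pj :: "int \<Rightarrow> nat \<Rightarrow> real"

type_synonym dfun = "jet \<Rightarrow> real"

definition pdt :: "int \<Rightarrow> dfun \<Rightarrow> dfun" where
  "pdt k F = (\<lambda>z. deriv (\<lambda>a. F (z\<lparr>tj := (tj z)(k := a)\<rparr>)) (tj z k))"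

definition pdq :: "int \<Rightarrow> nat \<Rightarrow> dfun \<Rightarrow> dfun" where
  "pdq k j F = (\<lambda>z. deriv (\<lambda>a. F (z\<lparr>qj := (qj z)(k := (qj z k)(j := a))\<rparr>)) (qj z k j))"

definition pdp :: "int \<Rightarrow> nat \<Rightarrow> dfun \<Rightarrow> dfun" where
  "pdp k j F = (\<lambda>z. deriv (\<lambda>a. F (z\<lparr>pj := (pj z)(k := (pj z k)(j := a))\<rparr>)) (pj z k j))"

text \<open>Total derivative D, acting on the variables at all lattice points
  (for differential functions only finitely many terms are nonzero).\<close>

definition Dtot :: "dfun \<Rightarrow> dfun" where
  "Dtot F = (\<lambda>z. infsum (\<lambda>k. pdt k F z) UNIV
     + infsum (\<lambda>(k, j). qj z k (Suc j) * pdq k j F z) UNIV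
     + infsum (\<lambda>(k, j). pj z k (Suc j) * pdp k j F z) UNIV)"

text \<open>Shift operators: Sh 1 = S_+, Sh (-1) = S_-.\<close>

definition jshift :: "int \<Rightarrow> jet \<Rightarrow> jet" where
  "jshift n z = \<lparr>tj = (\<lambda>k. tj z (k + n)), qj = (\<lambda>k. qj z (k + n)), pj = (\<lambda>k. pj z (k + n))\<rparr>"

definition Sh :: "int \<Rightarrow> dfun \<Rightarrow> dfun" where
  "Sh n F = (\<lambda>z. F (jshift n z))"

primrec prq :: "dfun \<Rightarrow> dfun \<Rightarrow> nat \<Rightarrow> dfun" where
  "prq xi eta 0 = eta"
| "prq xi eta (Suc j) = (\<lambda>z. Dtot (prq xi eta j) z - qj z 0 (Suc j) * Dtot xi z)"

primrec prp :: "dfun \<Rightarrow> dfun \<Rightarrow> nat \<Rightarrow> dfun" where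
  "prp xi nu 0 = nu"
| "prp xi nu (Suc j) = (\<lambda>z. Dtot (prp xi nu j) z - pj z 0 (Suc j) * Dtot xi z)"

definition Xpr :: "dfun \<Rightarrow> dfun \<Rightarrow> dfun \<Rightarrow> dfun \<Rightarrow> dfun" where
  "Xpr xi eta nu F = (\<lambda>z. infsum (\<lambda>k. Sh k xi z * pdt k F z) UNIV
     + infsum (\<lambda>(k, j). Sh k (prq xi eta j) z * pdq k j F z) UNIV
     + infsum (\<lambda>(k, j). Sh k (prp xi nu j) z * pdp k j F z) UNIV)"

definition var_p :: "dfun \<Rightarrow> dfun" where
  "var_p F = (\<lambda>z. pdp 0 0 F z - Dtot (pdp 0 1 F) z
     + Sh 1 (\<lambda>w. pdp (-1) 0 F w - Dtot (pdp (-1) 1 F) w) z)"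

definition var_q :: "dfun \<Rightarrow> dfun" where
  "var_q F = (\<lambda>z. pdq 0 0 F z - Dtot (pdq 0 1 F) z
     + Sh 1 (\<lambda>w. pdq (-1) 0 F w - Dtot (pdq (-1) 1 F) w) z)"

definition var_t :: "dfun \<Rightarrow> dfun" where
  "var_t F = (\<lambda>z. pdt 0 F z
     + Dtot (\<lambda>w. qj w 0 1 * pdq 0 1 F w + pj w 0 1 * pdp 0 1 F w) z
     + Sh 1 (\<lambda>w. pdt (-1) F w
          + Dtot (\<lambda>u. qj u (-1) 1 * pdq (-1) 1 F u + pj u (-1) 1 * pdp (-1) 1 F u) w) z
     - Dtot F z)"

definition xi_fn :: "real \<Rightarrow> (real \<Rightarrow> real) \<Rightarrow> dfun" where
  "xi_fn \<alpha> f = (\<lambda>z. \<alpha> * tj z 0 + f (tj z 0))"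

definition lift3 :: "(real \<Rightarrow> real \<Rightarrow> real \<Rightarrow> real) \<Rightarrow> dfun" where
  "lift3 g = (\<lambda>z. g (tj z 0) (qj z 0 0) (pj z 0 0))"

definition Htilde :: "real \<Rightarrow> real \<Rightarrow> real \<Rightarrow> real \<Rightarrow>
    (real \<Rightarrow> real \<Rightarrow> real \<Rightarrow> real \<Rightarrow> real \<Rightarrow> real \<Rightarrow> real) \<Rightarrow> dfun" where
  "Htilde a1 a2 a3 a4 H = (\<lambda>z.
      pj z (-1) 0 * (a1 * qj z 0 1 + a2 * qj z (-1) 1)
    + pj z 0 0 * (a3 * qj z 0 1 + a4 * qj z (-1) 1)
    - H (tj z 0) (tj z (-1)) (qj z 0 0) (qj z (-1) 0) (pj z 0 0) (pj z (-1) 0))"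

definition Omega :: "dfun \<Rightarrow> dfun \<Rightarrow> dfun \<Rightarrow> dfun \<Rightarrow> dfun" where
  "Omega xi eta nu Ht = (\<lambda>z. Xpr xi eta nu Ht z + Ht z * Dtot xi z)"

definition Evar :: "dfun \<Rightarrow> dfun \<Rightarrow> dfun \<Rightarrow> dfun \<Rightarrow> dfun" where
  "Evar xi eta nu F = (\<lambda>z. xi z * var_t F z + eta z * var_q F z + nu z * var_p F z)"

end

theory Submission
  imports Defs
begin


lemma smooth_D:
  assumes "smooth_fn (g::'a::real_normed_vector \<Rightarrow> real)"
  shows "\<exists>g'. (\<forall>x. (g has_derivative g' x) (at x)) \<and> (\<forall>v. smooth_fn (\<lambda>x. g' x v))"
proof -
  from assms have "Ck (Suc 0) g" unfolding smooth_fn_def by blast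
  then obtain g' where g': "\<forall>x. (g has_derivative g' x) (at x)" unfolding Ck.simps by blast
  have "Ck k (\<lambda>x. g' x v)" for k v
  proof -
    from assms have "Ck (Suc k) g" unfolding smooth_fn_def by blast
    then have "\<exists>g''. (\<forall>x. (g has_derivative g'' x) (at x)) \<and> (\<forall>v. Ck k (\<lambda>x. g'' x v))" by (simp only: Ck.simps)
    then obtain g'' where g'': "\<forall>x. (g has_derivative g'' x) (at x)" and c: "\<forall>v. Ck k (\<lambda>x. g'' x v)" by (elim exE conjE)
    have "g'' = g'" by (rule ext, rule has_derivative_unique[OF g''[rule_format] g'[rule_format]])
    with c show ?thesis by simp
  qed
  with g' show ?thesis unfolding smooth_fn_def by blast
qed

definition pd :: "('a::real_normed_vector \<Rightarrow> real) \<Rightarrow> 'a \<Rightarrow> 'a \<Rightarrow> real" where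
  "pd g v = (\<lambda>x. frechet_derivative g (at x) v)"

lemma smooth_has_derivative:
  assumes "smooth_fn g"
  shows "(g has_derivative (\<lambda>h. pd g h x)) (at x)"
proof -
  obtain g' where g': "\<forall>x. (g has_derivative g' x) (at x)" using smooth_D[OF assms] by blast
  have "g' x = frechet_derivative g (at x)" using g' frechet_derivative_at by blast
  then have "(g has_derivative frechet_derivative g (at x)) (at x)" using g' by metis
  then show ?thesis unfolding pd_def by simp
qed

lemma smooth_pd:
  assumes "smooth_fn g"
  shows "smooth_fn (pd g v)"
proof -
  obtain g' where g': "\<forall>x. (g has_derivative g' x) (at x)" and s: "\<forall>v. smooth_fn (\<lambda>x. g' x v)"
    using smooth_D[OF assms] by blast
  have "g' x = frechet_derivative g (at x)" for x using g' frechet_derivative_at by blast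
  then have "pd g v = (\<lambda>x. g' x v)" unfolding pd_def by auto
  with s show ?thesis by simp
qed

lemma smooth_cont: "smooth_fn g \<Longrightarrow> continuous_on UNIV g"
  unfolding smooth_fn_def by (metis Ck.simps(1))

lemma pd_scale:
  assumes "smooth_fn g"
  shows "pd g (r *\<^sub>R v) x = r * pd g v x"
proof -
  have "bounded_linear (\<lambda>h. pd g h x)" using smooth_has_derivative[OF assms] has_derivative_bounded_linear by blast
  then have "linear (\<lambda>h. pd g h x)" by (rule bounded_linear.linear)
  then have "\<forall>c y. pd g (c *\<^sub>R y) x = c *\<^sub>R pd g y x" unfolding linear_iff by blast
  then have "pd g (r *\<^sub>R v) x = r *\<^sub>R pd g v x" by blast
  then show ?thesis by simp
qed

lemma line_deriv:
  assumes "smooth_fn g"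
  shows "((\<lambda>a. g (x + (a - a0) *\<^sub>R v)) has_real_derivative pd g v (x + (b - a0) *\<^sub>R v)) (at b)"
proof -
  have l: "((\<lambda>a. x + (a - a0) *\<^sub>R v) has_derivative (\<lambda>h. h *\<^sub>R v)) (at b)"
    by (auto intro!: derivative_eq_intros)
  have "((g \<circ> (\<lambda>a. x + (a - a0) *\<^sub>R v)) has_derivative ((\<lambda>h. pd g h (x + (b - a0) *\<^sub>R v)) \<circ> (\<lambda>h. h *\<^sub>R v))) (at b)"
    by (rule diff_chain_at[OF l smooth_has_derivative[OF assms]])
  then have "((\<lambda>a. g (x + (a - a0) *\<^sub>R v)) has_derivative (\<lambda>h. pd g (h *\<^sub>R v) (x + (b - a0) *\<^sub>R v))) (at b)"
    unfolding o_def .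
  moreover have "(\<lambda>h. pd g (h *\<^sub>R v) (x + (b - a0) *\<^sub>R v)) = (*) (pd g v (x + (b - a0) *\<^sub>R v))"
    by (rule ext) (simp add: pd_scale[OF assms] mult.commute)
  ultimately show ?thesis unfolding has_field_derivative_def by simp
qed

lemma line_deriv0:
  assumes "smooth_fn g"
  shows "((\<lambda>a. g (x + a *\<^sub>R v)) has_real_derivative pd g v (x + b *\<^sub>R v)) (at b)"
  using line_deriv[OF assms, of x 0 v b] by simp

lemma cont_eps:
  assumes "smooth_fn g" "e > 0"
  shows "\<exists>d>0. \<forall>y. norm (y - x) < d \<longrightarrow> \<bar>g y - g x\<bar> < e"
proof -
  have "isCont g x" using smooth_cont[OF assms(1)] continuous_on_eq_continuous_at[of UNIV g] by simp
  then have "\<forall>r>0. \<exists>s>0. \<forall>y. y \<noteq> x \<and> norm (y - x) < s \<longrightarrow> norm (g y - g x) < r"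
    unfolding isCont_def LIM_eq .
  then obtain d where "d > 0" "\<forall>y. y \<noteq> x \<and> norm (y - x) < d \<longrightarrow> norm (g y - g x) < e"
    using assms(2) by blast
  then show ?thesis using assms(2) by (metis abs_zero diff_self real_norm_def)
qed

lemma sym_claim:
  assumes g: "smooth_fn g" and h: "h > 0"
  shows "\<exists>y. g (x + h *\<^sub>R u + h *\<^sub>R v) - g (x + h *\<^sub>R u) - g (x + h *\<^sub>R v) + g x
            = h * (h * pd (pd g u) v y) \<and> norm (y - x) \<le> h * (norm u + norm v)"
proof -
  define P where "P s = g ((x + h *\<^sub>R v) + s *\<^sub>R u) - g (x + s *\<^sub>R u)" for s
  have dP: "(P has_real_derivative (pd g u ((x + h *\<^sub>R v) + s *\<^sub>R u) - pd g u (x + s *\<^sub>R u))) (at s)" for s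
    unfolding P_def by (intro DERIV_diff line_deriv0[OF g])
  obtain \<sigma> where s: "0 < \<sigma>" "\<sigma> < h"
    and eq1: "P h - P 0 = (h - 0) * (pd g u ((x + h *\<^sub>R v) + \<sigma> *\<^sub>R u) - pd g u (x + \<sigma> *\<^sub>R u))"
    using MVT2[OF h, of P "\<lambda>s. pd g u ((x + h *\<^sub>R v) + s *\<^sub>R u) - pd g u (x + s *\<^sub>R u)"] dP by blast
  define R where "R t = pd g u ((x + \<sigma> *\<^sub>R u) + t *\<^sub>R v)" for t
  have gu: "smooth_fn (pd g u)" by (rule smooth_pd[OF g])
  have dR: "(R has_real_derivative pd (pd g u) v ((x + \<sigma> *\<^sub>R u) + t *\<^sub>R v)) (at t)" for t
    unfolding R_def by (rule line_deriv0[OF gu])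
  obtain \<tau> where t: "0 < \<tau>" "\<tau> < h"
    and eq2: "R h - R 0 = (h - 0) * pd (pd g u) v ((x + \<sigma> *\<^sub>R u) + \<tau> *\<^sub>R v)"
    using MVT2[OF h, of R "\<lambda>t. pd (pd g u) v ((x + \<sigma> *\<^sub>R u) + t *\<^sub>R v)"] dR by blast
  define y where "y = (x + \<sigma> *\<^sub>R u) + \<tau> *\<^sub>R v"
  have "P h - P 0 = g (x + h *\<^sub>R u + h *\<^sub>R v) - g (x + h *\<^sub>R u) - g (x + h *\<^sub>R v) + g x"
    unfolding P_def by (simp add: algebra_simps)
  moreover have "R h - R 0 = pd g u ((x + h *\<^sub>R v) + \<sigma> *\<^sub>R u) - pd g u (x + \<sigma> *\<^sub>R u)"
    unfolding R_def by (simp add: algebra_simps)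
  ultimately have e: "g (x + h *\<^sub>R u + h *\<^sub>R v) - g (x + h *\<^sub>R u) - g (x + h *\<^sub>R v) + g x
            = h * (h * pd (pd g u) v y)" using eq1 eq2 unfolding y_def by simp
  have "norm (y - x) \<le> norm (\<sigma> *\<^sub>R u) + norm (\<tau> *\<^sub>R v)" unfolding y_def
    by (metis add_diff_cancel_left' add.assoc norm_triangle_ineq)
  also have "\<dots> = \<sigma> * norm u + \<tau> * norm v" using s t by simp
  also have "\<dots> \<le> h * norm u + h * norm v" using s t
    by (intro add_mono mult_right_mono) auto
  finally have "norm (y - x) \<le> h * (norm u + norm v)" by (simp add: algebra_simps)
  with e show ?thesis by blast
qed

lemma pd_sym:
  assumes g: "smooth_fn g"
  shows "pd (pd g u) v x = pd (pd g v) u x"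
proof (rule ccontr)
  let ?A = "pd (pd g u) v" and ?B = "pd (pd g v) u"
  assume ne: "?A x \<noteq> ?B x"
  define e where "e = \<bar>?A x - ?B x\<bar> / 3"
  have e: "e > 0" using ne unfolding e_def by simp
  have sA: "smooth_fn ?A" "smooth_fn ?B" using g by (simp_all add: smooth_pd)
  obtain d1 where d1: "d1 > 0" "\<forall>y. norm (y - x) < d1 \<longrightarrow> \<bar>?A y - ?A x\<bar> < e"
    using cont_eps[OF sA(1) e] by blast
  obtain d2 where d2: "d2 > 0" "\<forall>y. norm (y - x) < d2 \<longrightarrow> \<bar>?B y - ?B x\<bar> < e"
    using cont_eps[OF sA(2) e] by blast
  define h where "h = min d1 d2 / (2 * (norm u + norm v + 1))"
  have npos: "norm u + norm v + 1 > 0" by (simp add: add_nonneg_pos)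
  have h: "h > 0" unfolding h_def using d1 d2 npos by simp
  have hb: "h * (norm u + norm v) < min d1 d2"
  proof -
    have "h * (norm u + norm v) \<le> h * (norm u + norm v + 1)" using h by simp
    also have "\<dots> = min d1 d2 / 2" unfolding h_def using npos by (simp add: field_simps)
    also have "\<dots> < min d1 d2" using d1(1) d2(1) by (simp add: min_def)
    finally show ?thesis .
  qed
  obtain y1 where y1: "g (x + h *\<^sub>R u + h *\<^sub>R v) - g (x + h *\<^sub>R u) - g (x + h *\<^sub>R v) + g x
            = h * (h * ?A y1)" "norm (y1 - x) \<le> h * (norm u + norm v)"
    using sym_claim[OF g h, of x u v] by blast
  obtain y2 where y2: "g (x + h *\<^sub>R v + h *\<^sub>R u) - g (x + h *\<^sub>R v) - g (x + h *\<^sub>R u) + g x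
            = h * (h * ?B y2)" "norm (y2 - x) \<le> h * (norm v + norm u)"
    using sym_claim[OF g h, of x v u] by blast
  have eq: "x + h *\<^sub>R v + h *\<^sub>R u = x + h *\<^sub>R u + h *\<^sub>R v" by (simp add: algebra_simps)
  have "h * (h * ?A y1) = h * (h * ?B y2)" using y1(1) y2(1)[unfolded eq] by linarith
  then have AB: "?A y1 = ?B y2" using h by simp
  have "\<bar>?A y1 - ?A x\<bar> < e" using d1 y1(2) hb by simp
  moreover have "\<bar>?B y2 - ?B x\<bar> < e" using d2 y2(2) hb by (simp add: add.commute)
  ultimately have "\<bar>?A x - ?B x\<bar> < 2 * e" using AB by linarith
  moreover have "3 * e = \<bar>?A x - ?B x\<bar>" unfolding e_def by simp
  ultimately show False using e by linarith
qed

primrec pds :: "('a::real_normed_vector \<Rightarrow> real) \<Rightarrow> 'a list \<Rightarrow> 'a \<Rightarrow> real" where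
  "pds g [] = g"
| "pds g (v # vs) = pds (pd g v) vs"

lemma smooth_pds: "smooth_fn g \<Longrightarrow> smooth_fn (pds g vs)"
  by (induction vs arbitrary: g) (simp_all add: smooth_pd)

lemma pds_snoc: "pds g (vs @ [v]) = pd (pds g vs) v"
  by (induction vs arbitrary: g) simp_all

lemma pds_move: "smooth_fn g \<Longrightarrow> pds g (vs @ [v]) = pds g (v # vs)"
proof (induction vs arbitrary: g)
  case Nil
  then show ?case by simp
next
  case (Cons m vs)
  have "pds g ((m # vs) @ [v]) = pds (pd g m) (vs @ [v])" by simp
  also have "\<dots> = pds (pd g m) (v # vs)" using Cons.IH[OF smooth_pd[OF Cons.prems]] .
  also have "\<dots> = pds (pd (pd g m) v) vs" by simp
  also have "pd (pd g m) v = pd (pd g v) m" by (rule ext, rule pd_sym[OF Cons.prems])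
  finally show ?case by simp
qed

lemma pds_insort: "smooth_fn g \<Longrightarrow> pds g (map e (insort i ms)) = pds g (map e ms @ [e i])"
proof (induction ms arbitrary: g)
  case Nil
  then show ?case by simp
next
  case (Cons m ms)
  show ?case
  proof (cases "i \<le> m")
    case True
    then have "pds g (map e (insort i (m # ms))) = pds g (e i # map e (m # ms))" by simp
    also have "\<dots> = pds g (map e (m # ms) @ [e i])" using pds_move[OF Cons.prems] by metis
    finally show ?thesis .
  next
    case False
    then have "pds g (map e (insort i (m # ms))) = pds (pd g (e m)) (map e (insort i ms))" by simp
    also have "\<dots> = pds (pd g (e m)) (map e ms @ [e i])" using Cons.IH[OF smooth_pd[OF Cons.prems]] .
    finally show ?thesis by simp
  qed
qed

lemma pd_periodic:
  fixes g :: "real \<Rightarrow> real"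
  assumes g: "smooth_fn g" and per: "\<forall>t. g (t + T) = g t"
  shows "pd g v (x + T) = pd g v x"
proof -
  have d1: "(g has_derivative (\<lambda>h. pd g h (x + T))) (at (x + T))" by (rule smooth_has_derivative[OF g])
  have d2: "((\<lambda>y. y + T) has_derivative (\<lambda>h. h)) (at x)" by (auto intro!: derivative_eq_intros)
  have "((g \<circ> (\<lambda>y. y + T)) has_derivative ((\<lambda>h. pd g h (x + T)) \<circ> (\<lambda>h. h))) (at x)"
    by (rule diff_chain_at[OF d2 d1])
  moreover have "g \<circ> (\<lambda>y. y + T) = g" using per by (simp add: o_def)
  ultimately have "(g has_derivative (\<lambda>h. pd g h (x + T))) (at x)" by (simp add: o_def)
  then have "(\<lambda>h. pd g h (x + T)) = (\<lambda>h. pd g h x)"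
    using has_derivative_unique smooth_has_derivative[OF g] by blast
  then show ?thesis by metis
qed

lemma pds_periodic:
  fixes g :: "real \<Rightarrow> real"
  assumes "smooth_fn g" and "\<forall>t. g (t + T) = g t"
  shows "pds g vs (x + T) = pds g vs x"
  using assms
proof (induction vs arbitrary: g)
  case Nil
  then show ?case by simp
next
  case (Cons v vs)
  have "smooth_fn (pd g v)" using smooth_pd[OF Cons.prems(1)] .
  moreover have "\<forall>t. pd g v (t + T) = pd g v t" using pd_periodic[OF Cons.prems] by blast
  ultimately show ?case using Cons.IH by simp
qed



datatype cvar = VT int | VQ int nat | VP int nat
datatype fid = FH | FE | FN | FF
datatype expr = Cn int | Pr nat | V cvar | Fn fid "nat list" int | Add expr expr | Mul expr expr

fun get :: "jet \<Rightarrow> cvar \<Rightarrow> real" where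
  "get w (VT k) = tj w k"
| "get w (VQ k j) = qj w k j"
| "get w (VP k j) = pj w k j"

fun upd :: "jet \<Rightarrow> cvar \<Rightarrow> real \<Rightarrow> jet" where
  "upd w (VT k) a = w\<lparr>tj := (tj w)(k := a)\<rparr>"
| "upd w (VQ k j) a = w\<lparr>qj := (qj w)(k := (qj w k)(j := a))\<rparr>"
| "upd w (VP k j) a = w\<lparr>pj := (pj w)(k := (pj w k)(j := a))\<rparr>"

lemma get_upd: "get (upd w c a) c' = (if c' = c then a else get w c')"
  by (cases c; cases c') auto

lemma upd_get: "upd w c (get w c) = w"
  by (cases c) auto

type_synonym R6 = "real \<times> real \<times> real \<times> real \<times> real \<times> real"
type_synonym R3 = "real \<times> real \<times> real"

definition hargs :: "int \<Rightarrow> jet \<Rightarrow> R6" where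
  "hargs s w = (tj w s, tj w (s - 1), qj w s 0, qj w (s - 1) 0, pj w s 0, pj w (s - 1) 0)"
definition eargs :: "int \<Rightarrow> jet \<Rightarrow> R3" where
  "eargs s w = (tj w s, qj w s 0, pj w s 0)"

definition eH :: "nat \<Rightarrow> R6" where
  "eH i = (if i = 0 then 1 else 0, if i = 1 then 1 else 0, if i = 2 then 1 else 0,
           if i = 3 then 1 else 0, if i = 4 then 1 else 0, if i = 5 then 1 else 0)"
definition eE :: "nat \<Rightarrow> R3" where
  "eE i = (if i = 0 then 1 else 0, if i = 1 then 1 else 0, if i = 2 then 1 else 0)"

fun slots :: "fid \<Rightarrow> int \<Rightarrow> cvar list" where
  "slots FH s = [VT s, VT (s - 1), VQ s 0, VQ (s - 1) 0, VP s 0, VP (s - 1) 0]"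
| "slots FF s = [VT s]"
| "slots _ s = [VT s, VQ s 0, VP s 0]"

fun slot_idx :: "fid \<Rightarrow> int \<Rightarrow> cvar \<Rightarrow> nat option" where
  "slot_idx FH s (VT k) = (if k = s then Some 0 else if k = s - 1 then Some 1 else None)"
| "slot_idx FH s (VQ k j) = (if j = 0 then (if k = s then Some 2 else if k = s - 1 then Some 3 else None) else None)"
| "slot_idx FH s (VP k j) = (if j = 0 then (if k = s then Some 4 else if k = s - 1 then Some 5 else None) else None)"
| "slot_idx FF s (VT k) = (if k = s then Some 0 else None)"
| "slot_idx FF s _ = None"
| "slot_idx _ s (VT k) = (if k = s then Some 0 else None)"
| "slot_idx _ s (VQ k j) = (if k = s \<and> j = 0 then Some 1 else None)"
| "slot_idx _ s (VP k j) = (if k = s \<and> j = 0 then Some 2 else None)"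

lemma slot_idx_in: "slot_idx fid s c = Some i \<Longrightarrow> c \<in> set (slots fid s)"
  by (cases fid; cases c) (auto split: if_splits)

lemma hargs_upd_Some: "slot_idx FH s c = Some i \<Longrightarrow> hargs s (upd w c a) = hargs s w + (a - get w c) *\<^sub>R eH i"
  by (cases c) (auto simp: hargs_def eH_def split: if_splits)

lemma hargs_upd_None: "slot_idx FH s c = None \<Longrightarrow> hargs s (upd w c a) = hargs s w"
  by (cases c) (auto simp: hargs_def split: if_splits)

lemma slot_idx_FN: "slot_idx FN s c = slot_idx FE s c"
  by (cases c) auto

lemma eargs_upd_Some: "slot_idx FE s c = Some i \<Longrightarrow> eargs s (upd w c a) = eargs s w + (a - get w c) *\<^sub>R eE i"
  by (cases c) (auto simp: eargs_def eE_def split: if_splits)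

lemma eargs_upd_None: "slot_idx FE s c = None \<Longrightarrow> eargs s (upd w c a) = eargs s w"
  by (cases c) (auto simp: eargs_def split: if_splits)

lemma fargs_upd_Some: "slot_idx FF s c = Some i \<Longrightarrow> tj (upd w c a) s = tj w s + (a - get w c) *\<^sub>R 1"
  by (cases c) (auto split: if_splits)

lemma fargs_upd_None: "slot_idx FF s c = None \<Longrightarrow> tj (upd w c a) s = tj w s"
  by (cases c) (auto split: if_splits)

definition is0 :: "expr \<Rightarrow> bool" where "is0 e = (e = Cn 0)"
definition is1 :: "expr \<Rightarrow> bool" where "is1 e = (e = Cn 1)"

definition add' :: "expr \<Rightarrow> expr \<Rightarrow> expr" where
  "add' a b = (if is0 a then b else if is0 b then a else Add a b)"
definition mul' :: "expr \<Rightarrow> expr \<Rightarrow> expr" where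
  "mul' a b = (if is0 a \<or> is0 b then Cn 0 else if is1 a then b else if is1 b then a else Mul a b)"
definition neg' :: "expr \<Rightarrow> expr" where "neg' a = mul' (Cn (-1)) a"

definition lunion :: "'a list \<Rightarrow> 'a list \<Rightarrow> 'a list" where
  "lunion xs ys = xs @ filter (\<lambda>y. y \<notin> set xs) (remdups ys)"

fun cvs :: "expr \<Rightarrow> cvar list" where
  "cvs (V c) = [c]"
| "cvs (Fn fid ms s) = slots fid s"
| "cvs (Add a b) = lunion (cvs a) (cvs b)"
| "cvs (Mul a b) = lunion (cvs a) (cvs b)"
| "cvs _ = []"

lemma distinct_slots: "distinct (slots fid s)"
  by (cases fid) auto

lemma distinct_cvs: "distinct (cvs e)"
  by (induction e) (auto simp: lunion_def distinct_slots)

lemma set_lunion [simp]: "set (lunion xs ys) = set xs \<union> set ys"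
  by (auto simp: lunion_def)

lemma set_cvs_Add: "set (cvs (Add a b)) = set (cvs a) \<union> set (cvs b)"
  by (auto simp: lunion_def)
lemma set_cvs_Mul: "set (cvs (Mul a b)) = set (cvs a) \<union> set (cvs b)"
  by (auto simp: lunion_def)

fun sd :: "cvar \<Rightarrow> expr \<Rightarrow> expr" where
  "sd c (V c') = (if c = c' then Cn 1 else Cn 0)"
| "sd c (Fn fid ms s) = (case slot_idx fid s c of Some i \<Rightarrow> Fn fid (insort i ms) s | None \<Rightarrow> Cn 0)"
| "sd c (Add a b) = add' (sd c a) (sd c b)"
| "sd c (Mul a b) = add' (mul' (sd c a) b) (mul' a (sd c b))"
| "sd c _ = Cn 0"

fun shc :: "int \<Rightarrow> cvar \<Rightarrow> cvar" where
  "shc n (VT k) = VT (k + n)"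
| "shc n (VQ k j) = VQ (k + n) j"
| "shc n (VP k j) = VP (k + n) j"

fun ssh :: "int \<Rightarrow> expr \<Rightarrow> expr" where
  "ssh n (V c) = V (shc n c)"
| "ssh n (Fn fid ms s) = Fn fid ms (s + n)"
| "ssh n (Add a b) = Add (ssh n a) (ssh n b)"
| "ssh n (Mul a b) = Mul (ssh n a) (ssh n b)"
| "ssh n e = e"

fun sumE :: "expr list \<Rightarrow> expr" where
  "sumE [] = Cn 0"
| "sumE (x # xs) = add' x (sumE xs)"

definition sgen :: "(cvar \<Rightarrow> expr) \<Rightarrow> expr \<Rightarrow> expr" where
  "sgen \<kappa> e = sumE (map (\<lambda>c. mul' (\<kappa> c) (sd c e)) (cvs e))"

fun dco :: "cvar \<Rightarrow> expr" where
  "dco (VT k) = Cn 1"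
| "dco (VQ k j) = V (VQ k (Suc j))"
| "dco (VP k j) = V (VP k (Suc j))"

fun fslots :: "fid \<Rightarrow> int \<Rightarrow> (nat \<times> cvar) list" where
  "fslots FH s = [(0, VT s), (1, VT (s - 1)), (2, VQ s 0), (3, VQ (s - 1) 0), (4, VP s 0), (5, VP (s - 1) 0)]"
| "fslots FF s = [(0, VT s)]"
| "fslots _ s = [(0, VT s), (1, VQ s 0), (2, VP s 0)]"

fun sGl :: "(cvar \<Rightarrow> expr) \<Rightarrow> expr \<Rightarrow> expr" where
  "sGl \<kappa> (V c) = \<kappa> c"
| "sGl \<kappa> (Fn fid ms s) = sumE (map (\<lambda>(i, c). mul' (\<kappa> c) (Fn fid (insort i ms) s)) (fslots fid s))"
| "sGl \<kappa> (Add a b) = add' (sGl \<kappa> a) (sGl \<kappa> b)"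
| "sGl \<kappa> (Mul a b) = add' (mul' (sGl \<kappa> a) b) (mul' a (sGl \<kappa> b))"
| "sGl \<kappa> _ = Cn 0"

definition sD :: "expr \<Rightarrow> expr" where "sD e = sGl dco e"

primrec sprq :: "expr \<Rightarrow> expr \<Rightarrow> nat \<Rightarrow> expr" where
  "sprq xe he 0 = he"
| "sprq xe he (Suc j) = add' (sD (sprq xe he j)) (neg' (mul' (V (VQ 0 (Suc j))) (sD xe)))"

primrec sprp :: "expr \<Rightarrow> expr \<Rightarrow> nat \<Rightarrow> expr" where
  "sprp xe ne 0 = ne"
| "sprp xe ne (Suc j) = add' (sD (sprp xe ne j)) (neg' (mul' (V (VP 0 (Suc j))) (sD xe)))"

fun xco :: "expr \<Rightarrow> expr \<Rightarrow> expr \<Rightarrow> cvar \<Rightarrow> expr" where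
  "xco xe he ne (VT k) = ssh k xe"
| "xco xe he ne (VQ k j) = ssh k (sprq xe he j)"
| "xco xe he ne (VP k j) = ssh k (sprp xe ne j)"

definition sX :: "expr \<Rightarrow> expr \<Rightarrow> expr \<Rightarrow> expr \<Rightarrow> expr" where
  "sX xe he ne e = sGl (xco xe he ne) e"

definition svar_q :: "expr \<Rightarrow> expr" where
  "svar_q e = add' (add' (sd (VQ 0 0) e) (neg' (sD (sd (VQ 0 1) e))))
      (ssh 1 (add' (sd (VQ (-1) 0) e) (neg' (sD (sd (VQ (-1) 1) e)))))"

definition svar_p :: "expr \<Rightarrow> expr" where
  "svar_p e = add' (add' (sd (VP 0 0) e) (neg' (sD (sd (VP 0 1) e))))
      (ssh 1 (add' (sd (VP (-1) 0) e) (neg' (sD (sd (VP (-1) 1) e)))))"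

definition svar_t :: "expr \<Rightarrow> expr" where
  "svar_t e = add' (add' (add' (sd (VT 0) e)
        (sD (add' (mul' (V (VQ 0 1)) (sd (VQ 0 1) e)) (mul' (V (VP 0 1)) (sd (VP 0 1) e)))))
      (ssh 1 (add' (sd (VT (-1)) e)
        (sD (add' (mul' (V (VQ (-1) 1)) (sd (VQ (-1) 1) e)) (mul' (V (VP (-1) 1)) (sd (VP (-1) 1) e)))))))
      (neg' (sD e))"

definition sEvar :: "expr \<Rightarrow> expr \<Rightarrow> expr \<Rightarrow> expr \<Rightarrow> expr" where
  "sEvar xe he ne e = add' (add' (mul' xe (svar_t e)) (mul' he (svar_q e))) (mul' ne (svar_p e))"

definition sOmega :: "expr \<Rightarrow> expr \<Rightarrow> expr \<Rightarrow> expr \<Rightarrow> expr" where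
  "sOmega xe he ne e = add' (sX xe he ne e) (mul' e (sD xe))"

lemma infsum_fin:
  fixes \<phi> :: "'a \<Rightarrow> real"
  assumes "finite A" "\<And>x. x \<notin> A \<Longrightarrow> \<phi> x = 0"
  shows "infsum \<phi> UNIV = sum \<phi> A"
proof -
  have "infsum \<phi> UNIV = infsum \<phi> A"
    by (rule infsum_cong_neutral) (use assms(2) in auto)
  then show ?thesis using assms(1) by simp
qed

lemma sum_split_cvar:
  fixes \<psi> :: "cvar \<Rightarrow> real"
  assumes "finite S"
  shows "sum \<psi> S = sum (\<lambda>k. \<psi> (VT k)) (VT -` S) + sum (\<lambda>(k, j). \<psi> (VQ k j)) (case_prod VQ -` S)
     + sum (\<lambda>(k, j). \<psi> (VP k j)) (case_prod VP -` S)"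
  using assms
proof (induction S rule: finite_induct)
  case empty
  then show ?case by simp
next
  case (insert x F)
  have fT: "finite (VT -` F)" by (rule finite_vimageI[OF insert(1)]) (simp add: inj_def)
  have fQ: "finite (case_prod VQ -` F)" by (rule finite_vimageI[OF insert(1)]) (simp add: inj_def)
  have fP: "finite (case_prod VP -` F)" by (rule finite_vimageI[OF insert(1)]) (simp add: inj_def)
  show ?case
  proof (cases x)
    case (VT k)
    have a: "VT -` insert x F = insert k (VT -` F)" "case_prod VQ -` insert x F = case_prod VQ -` F"
      "case_prod VP -` insert x F = case_prod VP -` F" using VT by auto
    have "k \<notin> VT -` F" using VT insert(2) by auto
    then show ?thesis unfolding a using insert VT fT by simp
  next
    case (VQ k j)
    have a: "VT -` insert x F = VT -` F" "case_prod VQ -` insert x F = insert (k, j) (case_prod VQ -` F)"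
      "case_prod VP -` insert x F = case_prod VP -` F" using VQ by auto
    have "(k, j) \<notin> case_prod VQ -` F" using VQ insert(2) by auto
    then show ?thesis unfolding a using insert VQ fQ by simp
  next
    case (VP k j)
    have a: "VT -` insert x F = VT -` F" "case_prod VQ -` insert x F = case_prod VQ -` F"
      "case_prod VP -` insert x F = insert (k, j) (case_prod VP -` F)" using VP by auto
    have "(k, j) \<notin> case_prod VP -` F" using VP insert(2) by auto
    then show ?thesis unfolding a using insert VP fP by simp
  qed
qed

locale env =
  fixes Hc :: "R6 \<Rightarrow> real" and Ec Nc :: "R3 \<Rightarrow> real" and Fc :: "real \<Rightarrow> real" and \<rho> :: "nat \<Rightarrow> real"
  assumes sH: "smooth_fn Hc" and sE: "smooth_fn Ec" and sN: "smooth_fn Nc" and sF: "smooth_fn Fc"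
begin

fun fsem :: "fid \<Rightarrow> nat list \<Rightarrow> int \<Rightarrow> jet \<Rightarrow> real" where
  "fsem FH ms s w = pds Hc (map eH ms) (hargs s w)"
| "fsem FE ms s w = pds Ec (map eE ms) (eargs s w)"
| "fsem FN ms s w = pds Nc (map eE ms) (eargs s w)"
| "fsem FF ms s w = pds Fc (map (\<lambda>_. 1) ms) (tj w s)"

fun ev :: "expr \<Rightarrow> jet \<Rightarrow> real" where
  "ev (Cn c) w = of_int c"
| "ev (Pr n) w = \<rho> n"
| "ev (V c) w = get w c"
| "ev (Fn fid ms s) w = fsem fid ms s w"
| "ev (Add a b) w = ev a w + ev b w"
| "ev (Mul a b) w = ev a w * ev b w"

lemma ev_add' [simp]: "ev (add' a b) w = ev a w + ev b w"
  by (auto simp: add'_def is0_def)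
lemma ev_mul' [simp]: "ev (mul' a b) w = ev a w * ev b w"
  by (auto simp: mul'_def is0_def is1_def)
lemma ev_neg' [simp]: "ev (neg' a) w = - ev a w"
  by (simp add: neg'_def)

lemma fsem_deriv:
  "((\<lambda>a. fsem fid ms s (upd w c a)) has_real_derivative
     ev (case slot_idx fid s c of Some i \<Rightarrow> Fn fid (insort i ms) s | None \<Rightarrow> Cn 0) w) (at (get w c))"
proof (cases "slot_idx fid s c")
  case None
  then show ?thesis
    by (cases fid) (simp_all add: hargs_upd_None eargs_upd_None fargs_upd_None slot_idx_FN)
next
  case (Some i)
  show ?thesis
  proof (cases fid)
    case FH
    have "((\<lambda>a. pds Hc (map eH ms) (hargs s w + (a - get w c) *\<^sub>R eH i)) has_real_derivative
          pd (pds Hc (map eH ms)) (eH i) (hargs s w + (get w c - get w c) *\<^sub>R eH i)) (at (get w c))"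
      by (rule line_deriv[OF smooth_pds[OF sH]])
    then show ?thesis using Some FH
      by (simp add: hargs_upd_Some pds_insort[OF sH] pds_snoc)
  next
    case FE
    have "((\<lambda>a. pds Ec (map eE ms) (eargs s w + (a - get w c) *\<^sub>R eE i)) has_real_derivative
          pd (pds Ec (map eE ms)) (eE i) (eargs s w + (get w c - get w c) *\<^sub>R eE i)) (at (get w c))"
      by (rule line_deriv[OF smooth_pds[OF sE]])
    then show ?thesis using Some FE
      by (simp add: eargs_upd_Some pds_insort[OF sE] pds_snoc)
  next
    case FN
    have "((\<lambda>a. pds Nc (map eE ms) (eargs s w + (a - get w c) *\<^sub>R eE i)) has_real_derivative
          pd (pds Nc (map eE ms)) (eE i) (eargs s w + (get w c - get w c) *\<^sub>R eE i)) (at (get w c))"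
      by (rule line_deriv[OF smooth_pds[OF sN]])
    then show ?thesis using Some FN
      by (simp add: slot_idx_FN eargs_upd_Some pds_insort[OF sN] pds_snoc)
  next
    case FF
    have "((\<lambda>a. pds Fc (map (\<lambda>_. 1) ms) (tj w s + (a - get w c) *\<^sub>R 1)) has_real_derivative
          pd (pds Fc (map (\<lambda>_. 1) ms)) 1 (tj w s + (get w c - get w c) *\<^sub>R 1)) (at (get w c))"
      by (rule line_deriv[OF smooth_pds[OF sF]])
    moreover have "pds Fc (map (\<lambda>_. 1) (insort i ms)) = pds Fc (map (\<lambda>_. 1) ms @ [1])"
      using pds_insort[OF sF, of "\<lambda>_. 1" i ms] by simp
    ultimately show ?thesis using Some FF
      by (simp add: fargs_upd_Some pds_snoc del: real_scaleR_def)
  qed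
qed

lemma sd_deriv: "((\<lambda>a. ev e (upd w c a)) has_real_derivative ev (sd c e) w) (at (get w c))"
proof (induction e)
  case (Cn x)
  then show ?case by simp
next
  case (Pr x)
  then show ?case by simp
next
  case (V x)
  then show ?case by (simp add: get_upd)
next
  case (Fn fid ms s)
  then show ?case using fsem_deriv by simp
next
  case (Add a b)
  then show ?case by (simp add: DERIV_add)
next
  case (Mul a b)
  have "((\<lambda>x. ev a (upd w c x) * ev b (upd w c x)) has_real_derivative
     ev a (upd w c (get w c)) * ev (sd c b) w + ev (sd c a) w * ev b (upd w c (get w c))) (at (get w c))"
    by (rule DERIV_mult'[OF Mul.IH])
  then show ?case by (simp add: upd_get add.commute)
qed

lemma sd_deriv_eq: "deriv (\<lambda>a. ev e (upd w c a)) (get w c) = ev (sd c e) w"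
  by (rule DERIV_imp_deriv[OF sd_deriv])

lemma pdt_ev: "pdt k (ev e) = ev (sd (VT k) e)"
  unfolding pdt_def using sd_deriv_eq[of e _ "VT k"] by (intro ext) simp
lemma pdq_ev: "pdq k j (ev e) = ev (sd (VQ k j) e)"
  unfolding pdq_def using sd_deriv_eq[of e _ "VQ k j"] by (intro ext) simp
lemma pdp_ev: "pdp k j (ev e) = ev (sd (VP k j) e)"
  unfolding pdp_def using sd_deriv_eq[of e _ "VP k j"] by (intro ext) simp

lemma sd_zero: "c \<notin> set (cvs e) \<Longrightarrow> ev (sd c e) w = 0"
proof (induction e)
  case (Fn fid ms s)
  then show ?case by (cases "slot_idx fid s c") (auto dest: slot_idx_in)
next
  case (Add a b)
  then show ?case by (simp add: set_cvs_Add)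
next
  case (Mul a b)
  then show ?case by (simp add: set_cvs_Mul)
qed auto


lemma ev_sumE: "ev (sumE xs) w = sum_list (map (\<lambda>x. ev x w) xs)"
  by (induction xs) simp_all

lemma ev_sgen: "ev (sgen \<kappa> e) w = (\<Sum>c\<in>set (cvs e). ev (\<kappa> c) w * ev (sd c e) w)"
  unfolding sgen_def ev_sumE by (simp add: o_def sum_list_distinct_conv_sum_set distinct_cvs)

lemma sgen_super:
  assumes "finite S" "set (cvs e) \<subseteq> S"
  shows "(\<Sum>c\<in>S. ev (\<kappa> c) w * ev (sd c e) w) = (\<Sum>c\<in>set (cvs e). ev (\<kappa> c) w * ev (sd c e) w)"
  by (rule sum.mono_neutral_right[OF assms(1,2)]) (simp add: sd_zero)

lemma ev_sGl: "ev (sGl \<kappa> e) w = ev (sgen \<kappa> e) w"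
proof (induction e)
  case (V c)
  then show ?case by (simp add: sgen_def)
next
  case (Fn fid ms s)
  show ?case unfolding ev_sgen
    by (cases fid) (simp_all add: sum.insert_remove)
next
  case (Add a b)
  let ?S = "set (cvs a) \<union> set (cvs b)"
  have "ev (sgen \<kappa> (Add a b)) w = (\<Sum>c\<in>?S. ev (\<kappa> c) w * ev (sd c a) w + ev (\<kappa> c) w * ev (sd c b) w)"
    unfolding ev_sgen cvs.simps set_lunion by (intro sum.cong refl) (simp add: distrib_left)
  also have "\<dots> = (\<Sum>c\<in>?S. ev (\<kappa> c) w * ev (sd c a) w) + (\<Sum>c\<in>?S. ev (\<kappa> c) w * ev (sd c b) w)"
    by (simp only: sum.distrib)
  also have "\<dots> = ev (sgen \<kappa> a) w + ev (sgen \<kappa> b) w"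
    unfolding ev_sgen
    by (simp only: sgen_super[of ?S a] sgen_super[of ?S b] finite_Un finite_set Un_upper1 Un_upper2)
  finally show ?case using Add by simp
next
  case (Mul a b)
  let ?S = "set (cvs a) \<union> set (cvs b)"
  have "ev (sgen \<kappa> (Mul a b)) w = (\<Sum>c\<in>?S. (ev (\<kappa> c) w * ev (sd c a) w) * ev b w + ev a w * (ev (\<kappa> c) w * ev (sd c b) w))"
    unfolding ev_sgen cvs.simps set_lunion by (intro sum.cong refl) (simp add: algebra_simps)
  also have "\<dots> = (\<Sum>c\<in>?S. ev (\<kappa> c) w * ev (sd c a) w) * ev b w + ev a w * (\<Sum>c\<in>?S. ev (\<kappa> c) w * ev (sd c b) w)"
    by (simp only: sum.distrib sum_distrib_left sum_distrib_right)
  also have "\<dots> = ev (sgen \<kappa> a) w * ev b w + ev a w * ev (sgen \<kappa> b) w"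
    unfolding ev_sgen
    by (simp only: sgen_super[of ?S a] sgen_super[of ?S b] finite_Un finite_set Un_upper1 Un_upper2)
  finally show ?case using Mul by simp
qed (simp_all add: sgen_def)

lemma ev_ssh: "ev (ssh n e) w = ev e (jshift n w)"
proof (induction e)
  case (V c)
  then show ?case by (cases c) (simp_all add: jshift_def)
next
  case (Fn fid ms s)
  have sh: "s - 1 + n = s + n - 1" by simp
  show ?case by (cases fid) (simp_all add: jshift_def hargs_def eargs_def sh)
qed simp_all

lemma Sh_ev: "Sh n (ev e) = ev (ssh n e)"
  unfolding Sh_def by (simp add: fun_eq_iff ev_ssh)

lemma gsum:
  "infsum (\<lambda>k. \<kappa>T k * pdt k (ev e) w) UNIV
   + infsum (\<lambda>(k, j). \<kappa>Q k j * pdq k j (ev e) w) UNIV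
   + infsum (\<lambda>(k, j). \<kappa>P k j * pdp k j (ev e) w) UNIV
   = (\<Sum>c\<in>set (cvs e). (case c of VT k \<Rightarrow> \<kappa>T k | VQ k j \<Rightarrow> \<kappa>Q k j | VP k j \<Rightarrow> \<kappa>P k j) * ev (sd c e) w)"
proof -
  let ?S = "set (cvs e)"
  let ?\<psi> = "\<lambda>c. (case c of VT k \<Rightarrow> \<kappa>T k | VQ k j \<Rightarrow> \<kappa>Q k j | VP k j \<Rightarrow> \<kappa>P k j) * ev (sd c e) w"
  have fS: "finite ?S" by simp
  have fT: "finite (VT -` ?S)" by (rule finite_vimageI[OF fS]) (simp add: inj_def)
  have fQ: "finite (case_prod VQ -` ?S)" by (rule finite_vimageI[OF fS]) (simp add: inj_def)
  have fP: "finite (case_prod VP -` ?S)" by (rule finite_vimageI[OF fS]) (simp add: inj_def)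
  have 1: "infsum (\<lambda>k. \<kappa>T k * pdt k (ev e) w) UNIV = sum (\<lambda>k. ?\<psi> (VT k)) (VT -` ?S)"
    by (subst infsum_fin[OF fT]) (auto simp: pdt_ev sd_zero intro!: sum.cong)
  have 2: "infsum (\<lambda>(k, j). \<kappa>Q k j * pdq k j (ev e) w) UNIV = sum (\<lambda>(k, j). ?\<psi> (VQ k j)) (case_prod VQ -` ?S)"
    by (subst infsum_fin[OF fQ]) (auto simp: pdq_ev sd_zero intro!: sum.cong)
  have 3: "infsum (\<lambda>(k, j). \<kappa>P k j * pdp k j (ev e) w) UNIV = sum (\<lambda>(k, j). ?\<psi> (VP k j)) (case_prod VP -` ?S)"
    by (subst infsum_fin[OF fP]) (auto simp: pdp_ev sd_zero intro!: sum.cong)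
  show ?thesis unfolding 1 2 3 using sum_split_cvar[OF fS, of ?\<psi>] by simp
qed

lemma Dtot_ev: "Dtot (ev e) = ev (sD e)"
proof
  fix w
  have "Dtot (ev e) w = infsum (\<lambda>k. 1 * pdt k (ev e) w) UNIV
   + infsum (\<lambda>(k, j). qj w k (Suc j) * pdq k j (ev e) w) UNIV
   + infsum (\<lambda>(k, j). pj w k (Suc j) * pdp k j (ev e) w) UNIV" unfolding Dtot_def by simp
  also have "\<dots> = (\<Sum>c\<in>set (cvs e). ev (dco c) w * ev (sd c e) w)"
    unfolding gsum by (intro sum.cong refl) (auto split: cvar.split)
  finally show "Dtot (ev e) w = ev (sD e) w" unfolding sD_def ev_sGl ev_sgen .
qed

lemma prq_ev: "prq (ev xe) (ev he) j = ev (sprq xe he j)"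
  by (induction j) (simp_all add: Dtot_ev)

lemma prp_ev: "prp (ev xe) (ev ne) j = ev (sprp xe ne j)"
  by (induction j) (simp_all add: Dtot_ev)

lemma Xpr_ev: "Xpr (ev xe) (ev he) (ev ne) (ev e) = ev (sX xe he ne e)"
proof
  fix w
  have "Xpr (ev xe) (ev he) (ev ne) (ev e) w =
     infsum (\<lambda>k. ev (ssh k xe) w * pdt k (ev e) w) UNIV
   + infsum (\<lambda>(k, j). ev (ssh k (sprq xe he j)) w * pdq k j (ev e) w) UNIV
   + infsum (\<lambda>(k, j). ev (ssh k (sprp xe ne j)) w * pdp k j (ev e) w) UNIV"
    unfolding Xpr_def by (simp add: Sh_ev prq_ev prp_ev)
  also have "\<dots> = (\<Sum>c\<in>set (cvs e). ev (xco xe he ne c) w * ev (sd c e) w)"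
    unfolding gsum by (intro sum.cong refl) (auto split: cvar.split)
  finally show "Xpr (ev xe) (ev he) (ev ne) (ev e) w = ev (sX xe he ne e) w" unfolding sX_def ev_sGl ev_sgen .
qed

lemma lam_q0: "(\<lambda>w. qj w 0 (Suc 0) * ev a w + pj w 0 (Suc 0) * ev b w) = ev (add' (mul' (V (VQ 0 (Suc 0))) a) (mul' (V (VP 0 (Suc 0))) b))"
  by (simp add: fun_eq_iff)
lemma lam_qm: "(\<lambda>w. qj w (-1) (Suc 0) * ev a w + pj w (-1) (Suc 0) * ev b w) = ev (add' (mul' (V (VQ (-1) (Suc 0))) a) (mul' (V (VP (-1) (Suc 0))) b))"
  by (simp add: fun_eq_iff)

lemma var_q_ev: "var_q (ev e) = ev (svar_q e)"
  unfolding var_q_def svar_q_def by (simp add: fun_eq_iff pdq_ev Dtot_ev Sh_def ev_ssh)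
lemma var_p_ev: "var_p (ev e) = ev (svar_p e)"
  unfolding var_p_def svar_p_def by (simp add: fun_eq_iff pdp_ev Dtot_ev Sh_def ev_ssh)
lemma var_t_ev: "var_t (ev e) = ev (svar_t e)"
  unfolding var_t_def svar_t_def
  by (simp add: pdq_ev pdp_ev pdt_ev lam_q0 lam_qm Dtot_ev) (simp add: fun_eq_iff Sh_def ev_ssh Dtot_ev)

lemma Omega_ev: "Omega (ev xe) (ev he) (ev ne) (ev e) = ev (sOmega xe he ne e)"
  unfolding Omega_def sOmega_def by (simp add: fun_eq_iff Xpr_ev Dtot_ev)

lemma Evar_ev: "Evar (ev xe) (ev he) (ev ne) (ev e) = ev (sEvar xe he ne e)"
  unfolding Evar_def sEvar_def by (simp add: fun_eq_iff var_t_ev var_q_ev var_p_ev)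

end



definition "xe = Add (Mul (Pr 0) (V (VT 0))) (Fn FF [] 0)"
definition "he = Fn FE [] 0"
definition "ne = Fn FN [] 0"
definition "hte = Add (Add (Mul (V (VP (-1) 0)) (Add (Mul (Pr 1) (V (VQ 0 1))) (Mul (Pr 2) (V (VQ (-1) 1)))))
   (Mul (V (VP 0 0)) (Add (Mul (Pr 3) (V (VQ 0 1))) (Mul (Pr 4) (V (VQ (-1) 1))))))
   (Mul (Cn (-1)) (Fn FH [] 0))"

lemmas symdefs = xe_def he_def ne_def hte_def sEvar_def sOmega_def sX_def sD_def
  svar_t_def svar_q_def svar_p_def add'_def mul'_def neg'_def is0_def is1_def

context env begin

lemma final_eq:
  assumes lat1: "tj z 1 = tj z 0 + \<tau>" and latm: "tj z (-1) = tj z 0 - \<tau>"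
    and per: "\<forall>t. Fc (t + \<tau>) = Fc t"
  shows "ev (sEvar xe he ne (sOmega xe he ne hte)) z
       = ev (sX xe he ne (sEvar xe he ne hte)) z + ev (sD xe) z * ev (sEvar xe he ne hte) z"
proof -
  have p1: "pds Fc vs (tj z 0 + \<tau>) = pds Fc vs (tj z 0)" for vs using pds_periodic[OF sF per] by blast
  have pm: "pds Fc vs (tj z 0 - \<tau>) = pds Fc vs (tj z 0)" for vs
    using pds_periodic[OF sF per, of vs "tj z 0 - \<tau>"] by simp
  show ?thesis
    apply (simp add: symdefs del: pds.simps)
    apply (simp add: hargs_def eargs_def lat1 latm p1 pm del: pds.simps)
    apply algebra
    done
qed

end

theorem lemma4:
  fixes \<tau> \<alpha> a1 a2 a3 a4 :: real
    and f :: "real \<Rightarrow> real"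
    and H :: "real \<Rightarrow> real \<Rightarrow> real \<Rightarrow> real \<Rightarrow> real \<Rightarrow> real \<Rightarrow> real"
    and \<eta> \<nu> :: "real \<Rightarrow> real \<Rightarrow> real \<Rightarrow> real"
    and z :: jet
  assumes tau_pos: "\<tau> > 0"
    and H_smooth: "smooth_fn (\<lambda>(t, tm, q, qm, p, pm). H t tm q qm p pm)"
    and eta_smooth: "smooth_fn (\<lambda>(t, q, p). \<eta> t q p)"
    and nu_smooth: "smooth_fn (\<lambda>(t, q, p). \<nu> t q p)"
    and f_smooth: "smooth_fn f"
    and f_periodic: "\<forall>t. f (t + \<tau>) = f t"
    and lattice: "\<forall>k. tj z k = tj z 0 + real_of_int k * \<tau>"
  shows "Evar (xi_fn \<alpha> f) (lift3 \<eta>) (lift3 \<nu>)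
            (Omega (xi_fn \<alpha> f) (lift3 \<eta>) (lift3 \<nu>) (Htilde a1 a2 a3 a4 H)) z
       = Xpr (xi_fn \<alpha> f) (lift3 \<eta>) (lift3 \<nu>)
            (Evar (xi_fn \<alpha> f) (lift3 \<eta>) (lift3 \<nu>) (Htilde a1 a2 a3 a4 H)) z
         + Dtot (xi_fn \<alpha> f) z
            * Evar (xi_fn \<alpha> f) (lift3 \<eta>) (lift3 \<nu>) (Htilde a1 a2 a3 a4 H) z"
proof -
  define \<rho> where "\<rho> = (\<lambda>n::nat. if n = 0 then \<alpha> else if n = 1 then a1 else if n = 2 then a2
     else if n = 3 then a3 else a4)"
  interpret E: env "\<lambda>(t, tm, q, qm, p, pm). H t tm q qm p pm" "\<lambda>(t, q, p). \<eta> t q p"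
    "\<lambda>(t, q, p). \<nu> t q p" f \<rho>
    by unfold_locales (use H_smooth eta_smooth nu_smooth f_smooth in auto)
  have r: "\<rho> 0 = \<alpha>" "\<rho> 1 = a1" "\<rho> 2 = a2" "\<rho> 3 = a3" "\<rho> 4 = a4" "\<rho> (Suc 0) = a1" by (simp_all add: \<rho>_def)
  have xi: "xi_fn \<alpha> f = E.ev xe" by (simp add: fun_eq_iff xi_fn_def xe_def r)
  have eta: "lift3 \<eta> = E.ev he" by (simp add: fun_eq_iff lift3_def he_def eargs_def)
  have nu: "lift3 \<nu> = E.ev ne" by (simp add: fun_eq_iff lift3_def ne_def eargs_def)
  have ht: "Htilde a1 a2 a3 a4 H = E.ev hte" by (simp add: fun_eq_iff Htilde_def hte_def hargs_def r)
  have l1: "tj z 1 = tj z 0 + \<tau>" using lattice by (metis mult_1 of_int_1)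
  have lm: "tj z (-1) = tj z 0 - \<tau>" using lattice[rule_format, of "-1"] by simp
  show ?thesis unfolding xi eta nu ht E.Evar_ev E.Omega_ev E.Xpr_ev E.Dtot_ev
    by (rule E.final_eq[OF l1 lm f_periodic])
qed

end
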